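(* Let $k$ be a field of characteristic zero, ${\boldsymbol\lambda}\in M_n(k)$ antisymmetric, and $K=k_{\boldsymbol\lambda}(x_1,\dots,x_n)$. (a) If $B_{\boldsymbol\lambda}$ is the $k$-subspace of $K$ spanned by $\{\{f,g\}: f,g\in K\}$, then $B_{\boldsymbol\lambda}\cap k=\{0\}$. (b) For an $n$-tuple $y=(y_1,\dots,y_n)$ of nonzero elements of $K$, let $C_{\boldsymbol\lambda}(y)$ be the matrix $\big(\{y_i,y_j\}(y_iy_j)^{-1}\big)\in M_n(K)$, and let $C_{\boldsymbol\lambda}=\{C_{\boldsymbol\lambda}(y): y\in(K^\times)^n\}$. Then $C_{\boldsymbol\lambda}\cap M_n(k)=\{A{\boldsymbol\lambda}A^{\mathrm{tr}}: A\in M_n(\mathbb Z)\}$.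
   Context: For antisymmetric ${\boldsymbol\lambda}\in M_n(k)$, $k_{\boldsymbol\lambda}(x_1,\dots,x_n)$ is the rational function field $k(x_1,\dots,x_n)$ with the unique Poisson bracket satisfying $\{x_i,x_j\}=\lambda_{ij}x_ix_j$ for all $i,j$. *)

theory Defs
  imports Main "HOL-Library.Poly_Mapping"
begin

definition mon_eval :: "(nat \<Rightarrow> 'a::comm_ring_1) \<Rightarrow> (nat \<Rightarrow>\<^sub>0 nat) \<Rightarrow> 'a" where
  "mon_eval x m = (\<Prod>i\<in>Poly_Mapping.keys m. x i ^ Poly_Mapping.lookup m i)"

definition poly_eval :: "(nat \<Rightarrow> 'a::comm_ring_1) \<Rightarrow> ((nat \<Rightarrow>\<^sub>0 nat) \<Rightarrow>\<^sub>0 'a) \<Rightarrow> 'a" where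
  "poly_eval x p = (\<Sum>m\<in>Poly_Mapping.keys p. Poly_Mapping.lookup p m * mon_eval x m)"

definition is_poly_over :: "'a::comm_ring_1 set \<Rightarrow> nat \<Rightarrow> ((nat \<Rightarrow>\<^sub>0 nat) \<Rightarrow>\<^sub>0 'a) \<Rightarrow> bool" where
  "is_poly_over F n p \<longleftrightarrow> (\<forall>m. Poly_Mapping.lookup p m \<in> F) \<and> (\<forall>m\<in>Poly_Mapping.keys p. Poly_Mapping.keys m \<subseteq> {..<n})"

definition is_subfield :: "'a::field set \<Rightarrow> bool" where
  "is_subfield F \<longleftrightarrow> 0 \<in> F \<and> 1 \<in> F \<and> (\<forall>a\<in>F. \<forall>b\<in>F. a + b \<in> F \<and> a * b \<in> F)
     \<and> (\<forall>a\<in>F. - a \<in> F \<and> inverse a \<in> F)"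

text \<open>The whole field (UNIV) is the rational function field F(x_0,...,x_{n-1}):
  x_0..x_{n-1} are algebraically independent over the subfield F and every
  element is a quotient of polynomials in them with coefficients in F.\<close>
definition is_rational_function_field :: "'a::field set \<Rightarrow> nat \<Rightarrow> (nat \<Rightarrow> 'a) \<Rightarrow> bool" where
  "is_rational_function_field F n x \<longleftrightarrow> is_subfield F
     \<and> (\<forall>p. is_poly_over F n p \<longrightarrow> poly_eval x p = 0 \<longrightarrow> p = 0)
     \<and> (\<forall>f. \<exists>p q. is_poly_over F n p \<and> is_poly_over F n q \<and> poly_eval x q \<noteq> 0
              \<and> f = poly_eval x p / poly_eval x q)"

definition is_poisson_bracket :: "'a::field set \<Rightarrow> ('a \<Rightarrow> 'a \<Rightarrow> 'a) \<Rightarrow> bool" where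
  "is_poisson_bracket F br \<longleftrightarrow>
     (\<forall>a\<in>F. \<forall>f g h. br (a * f + g) h = a * br f h + br g h)
   \<and> (\<forall>f g. br f g = - br g f)
   \<and> (\<forall>f g h. br (f * g) h = f * br g h + g * br f h)
   \<and> (\<forall>f g h. br f (br g h) + br g (br h f) + br h (br f g) = 0)"

definition is_quantum_torus_bracket ::
  "'a::field set \<Rightarrow> nat \<Rightarrow> (nat \<Rightarrow> nat \<Rightarrow> 'a) \<Rightarrow> (nat \<Rightarrow> 'a) \<Rightarrow> ('a \<Rightarrow> 'a \<Rightarrow> 'a) \<Rightarrow> bool" where
  "is_quantum_torus_bracket F n lam x br \<longleftrightarrow>
     is_rational_function_field F n x \<and> is_poisson_bracket F br
   \<and> (\<forall>i<n. \<forall>j<n. br (x i) (x j) = lam i j * x i * x j)"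

definition bracket_span :: "'a::field set \<Rightarrow> ('a \<Rightarrow> 'a \<Rightarrow> 'a) \<Rightarrow> 'a set" where
  "bracket_span F br = {\<Sum>i<m. c i * br (f i) (g i) | (m::nat) c f g. \<forall>i<m. c i \<in> F}"

text \<open>n x n matrices are functions nat \<Rightarrow> nat \<Rightarrow> _ that vanish outside {..<n}^2.\<close>
definition C_mat :: "nat \<Rightarrow> ('a::field \<Rightarrow> 'a \<Rightarrow> 'a) \<Rightarrow> (nat \<Rightarrow> 'a) \<Rightarrow> nat \<Rightarrow> nat \<Rightarrow> 'a" where
  "C_mat n br y = (\<lambda>i j. if i < n \<and> j < n then br (y i) (y j) / (y i * y j) else 0)"

definition C_set :: "nat \<Rightarrow> ('a::field \<Rightarrow> 'a \<Rightarrow> 'a) \<Rightarrow> (nat \<Rightarrow> nat \<Rightarrow> 'a) set" where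
  "C_set n br = {C_mat n br y | y. \<forall>i<n. y i \<noteq> 0}"

definition congr_int :: "nat \<Rightarrow> (nat \<Rightarrow> nat \<Rightarrow> int) \<Rightarrow> (nat \<Rightarrow> nat \<Rightarrow> 'a::comm_ring_1) \<Rightarrow> nat \<Rightarrow> nat \<Rightarrow> 'a" where
  "congr_int n A lam = (\<lambda>i j. if i < n \<and> j < n
      then (\<Sum>p<n. \<Sum>q<n. of_int (A i p) * lam p q * of_int (A j q)) else 0)"

end

theory Submission imports Defs Complex_Main "HOL-Computational_Algebra.Primes" "HOL-Library.Infinite_Set" "HOL-Library.Function_Algebras" begin


locale qtb =
  fixes F :: "'a::field_char_0 set" and n :: nat and lam :: "nat \<Rightarrow> nat \<Rightarrow> 'a"
    and x :: "nat \<Rightarrow> 'a" and br :: "'a \<Rightarrow> 'a \<Rightarrow> 'a"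
  assumes lamF: "\<forall>i<n. \<forall>j<n. lam i j \<in> F"
    and antisym: "\<forall>i<n. \<forall>j<n. lam j i = - lam i j"
    and K: "is_quantum_torus_bracket F n lam x br"
begin

lemma subF: "is_subfield F" and indep: "\<And>p. is_poly_over F n p \<Longrightarrow> poly_eval x p = 0 \<Longrightarrow> p = 0"
  and rep: "\<And>f. \<exists>p q. is_poly_over F n p \<and> is_poly_over F n q \<and> poly_eval x q \<noteq> 0
              \<and> f = poly_eval x p / poly_eval x q"
  and PB: "is_poisson_bracket F br" and brx: "\<And>i j. i<n \<Longrightarrow> j<n \<Longrightarrow> br (x i) (x j) = lam i j * x i * x j"
  using K unfolding is_quantum_torus_bracket_def is_rational_function_field_def by blast+

lemma F0[simp]: "0 \<in> F" and F1[simp]: "1 \<in> F"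
  and Fadd[intro]: "a \<in> F \<Longrightarrow> b \<in> F \<Longrightarrow> a + b \<in> F"
  and Fmult[intro]: "a \<in> F \<Longrightarrow> b \<in> F \<Longrightarrow> a * b \<in> F"
  and Fneg[intro]: "a \<in> F \<Longrightarrow> - a \<in> F"
  and Finv[intro]: "a \<in> F \<Longrightarrow> inverse a \<in> F"
  using subF unfolding is_subfield_def by auto

lemma Fdiff[intro]: "a \<in> F \<Longrightarrow> b \<in> F \<Longrightarrow> a - b \<in> F"
  using Fadd Fneg by (metis diff_conv_add_uminus)
lemma Fdivide[intro]: "a \<in> F \<Longrightarrow> b \<in> F \<Longrightarrow> a / b \<in> F"
  using Fmult Finv by (metis divide_inverse)
lemma Fsum[intro]: "(\<And>i. i \<in> I \<Longrightarrow> f i \<in> F) \<Longrightarrow> sum f I \<in> F"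
  by (induction I rule: infinite_finite_induct) auto
lemma Fnat[intro]: "of_nat k \<in> F"
  by (induction k) auto
lemma Fint[intro]: "of_int k \<in> F"
proof -
  have "of_int k = (of_nat (nat k) - of_nat (nat (-k)) :: 'a)" by (cases "k \<ge> 0") auto
  then show ?thesis using Fdiff[OF Fnat Fnat] by simp
qed

lemma br_lin: "a \<in> F \<Longrightarrow> br (a * f + g) h = a * br f h + br g h"
  and br_anti: "br f g = - br g f"
  and br_leib: "br (f * g) h = f * br g h + g * br f h"
  using PB unfolding is_poisson_bracket_def by blast+

lemma br_add: "br (f + g) h = br f h + br g h"
  using br_lin[of 1 f g h] by simp
lemma br_smult: "a \<in> F \<Longrightarrow> br (a * f) h = a * br f h"
  using br_lin[of a f 0 h] br_add[of 0 0 h] by simp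
lemma br_zero[simp]: "br 0 h = 0"
  using br_add[of 0 0 h] by simp
lemma br_zero2[simp]: "br h 0 = 0"
  using br_anti[of h 0] by simp
lemma br_one[simp]: "br 1 h = 0"
  using br_leib[of 1 1 h] by simp
lemma br_one2[simp]: "br h 1 = 0"
  using br_anti[of h 1] by simp
lemma br_const: "c \<in> F \<Longrightarrow> br c h = 0"
  using br_smult[of c 1 h] by simp
lemma br_neg: "br (- f) h = - br f h"
  using br_smult[of "-1" f h] Fneg[OF F1] by simp
lemma br_diff: "br (f - g) h = br f h - br g h"
  using br_add[of f "-g" h] br_neg[of g h] by simp
lemma br_add2: "br h (f + g) = br h f + br h g"
  using br_add[of f g h] br_anti by (metis minus_add_distrib)
lemma br_smult2: "a \<in> F \<Longrightarrow> br h (a * f) = a * br h f"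
  using br_smult[of a f h] br_anti by (metis mult_minus_right)
lemma br_diff2: "br h (f - g) = br h f - br h g"
proof -
  have "br h (f - g) = - br (f - g) h" by (rule br_anti)
  also have "\<dots> = - br f h + br g h" by (simp add: br_diff)
  also have "\<dots> = br h f - br h g" using br_anti[of f h] br_anti[of g h] by simp
  finally show ?thesis .
qed
lemma br_leib2: "br h (f * g) = f * br h g + g * br h f"
  using br_leib[of f g h] br_anti by (metis add_uminus_conv_diff minus_add_distrib mult_minus_right)
lemma br_sum: "br (sum f I) h = (\<Sum>i\<in>I. br (f i) h)"
  by (induction I rule: infinite_finite_induct) (auto simp: br_add)
lemma br_sum2: "br h (sum f I) = (\<Sum>i\<in>I. br h (f i))"
  by (induction I rule: infinite_finite_induct) (auto simp: br_add2)
lemma br_inv: "f \<noteq> 0 \<Longrightarrow> br (inverse f) h = - br f h / f^2"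
proof -
  assume f: "f \<noteq> 0"
  have "0 = br (f * inverse f) h" using f by simp
  also have "\<dots> = f * br (inverse f) h + inverse f * br f h" by (rule br_leib)
  finally have "f * br (inverse f) h = - inverse f * br f h" by (simp add: eq_neg_iff_add_eq_0 algebra_simps)
  then have "br (inverse f) h = - inverse f * br f h / f" using f by (simp add: field_simps)
  then show ?thesis using f by (simp add: field_simps power2_eq_square)
qed
lemma br_quot: "S \<noteq> 0 \<Longrightarrow> br (f / S) h = (S * br f h - f * br S h) / S^2"
proof -
  assume S: "S \<noteq> 0"
  have "br (f / S) h = br (f * inverse S) h" by (simp add: divide_inverse)
  also have "\<dots> = f * br (inverse S) h + inverse S * br f h" by (rule br_leib)
  also have "\<dots> = f * (- br S h / S^2) + inverse S * br f h" using br_inv[OF S] by simp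
  also have "\<dots> = (S * br f h - f * br S h) / S^2" using S by (simp add: field_simps power2_eq_square)
  finally show ?thesis .
qed
lemma br_quot2: "S \<noteq> 0 \<Longrightarrow> br h (f / S) = (S * br h f - f * br h S) / S^2"
proof -
  assume S: "S \<noteq> 0"
  have "br h (f / S) = - br (f / S) h" by (rule br_anti)
  also have "\<dots> = - ((S * br f h - f * br S h) / S^2)" using br_quot[OF S] by simp
  also have "\<dots> = (S * (- br f h) - f * (- br S h)) / S^2" by (simp add: minus_divide_left algebra_simps)
  also have "\<dots> = (S * br h f - f * br h S) / S^2" by (simp only: br_anti[of h f] br_anti[of h S])
  finally show ?thesis .
qed

end

context qtb begin

lemma poly_eval_superset: "finite A \<Longrightarrow> Poly_Mapping.keys p \<subseteq> A \<Longrightarrow>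
  poly_eval x p = (\<Sum>m\<in>A. Poly_Mapping.lookup p m * mon_eval x m)"
  unfolding poly_eval_def by (rule sum.mono_neutral_left) (auto simp: in_keys_iff)

lemma poly_eval_add: "poly_eval x (p + q) = poly_eval x p + poly_eval x q"
proof -
  let ?A = "Poly_Mapping.keys p \<union> Poly_Mapping.keys q"
  have fin: "finite ?A" by simp
  have k: "Poly_Mapping.keys (p + q) \<subseteq> ?A" by (rule keys_add)
  show ?thesis
    using poly_eval_superset[OF fin k] poly_eval_superset[OF fin, of p] poly_eval_superset[OF fin, of q]
    by (simp add: lookup_add distrib_right sum.distrib)
qed

lemma poly_eval_zero[simp]: "poly_eval x 0 = 0"
  unfolding poly_eval_def by simp

lemma poly_eval_sum: "poly_eval x (sum g I) = (\<Sum>i\<in>I. poly_eval x (g i))"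
  by (induction I rule: infinite_finite_induct) (auto simp: poly_eval_add)

lemma poly_eval_single: "poly_eval x (Poly_Mapping.single m c) = c * mon_eval x m"
  unfolding poly_eval_def by simp

lemma xnz: "i < n \<Longrightarrow> x i \<noteq> 0"
proof
  assume i: "i < n" and x0: "x i = 0"
  let ?p = "Poly_Mapping.single (Poly_Mapping.single i (1::nat)) (1::'a)"
  have "is_poly_over F n ?p" unfolding is_poly_over_def using i
    by (auto simp: lookup_single when_def)
  moreover have "poly_eval x ?p = 0" using x0 by (simp add: poly_eval_single mon_eval_def)
  ultimately have "?p = 0" by (rule indep)
  then show False by (metis lookup_single_eq zero_neq_one lookup_zero)
qed

definition Zn :: "(nat \<Rightarrow> int) set" where "Zn = {a. \<forall>i\<ge>n. a i = 0}"
definition X :: "(nat \<Rightarrow> int) \<Rightarrow> 'a" where "X a = (\<Prod>i<n. x i powi a i)"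
definition B :: "(nat \<Rightarrow> int) \<Rightarrow> (nat \<Rightarrow> int) \<Rightarrow> 'a" where
  "B a b = (\<Sum>p<n. \<Sum>q<n. of_int (a p) * lam p q * of_int (b q))"
definition D :: "'a \<Rightarrow> 'a \<Rightarrow> 'a" where "D f g = br f g / (f * g)"

lemma Zn_add[intro]: "a \<in> Zn \<Longrightarrow> b \<in> Zn \<Longrightarrow> a + b \<in> Zn"
  and Zn_neg[intro]: "a \<in> Zn \<Longrightarrow> - a \<in> Zn"
  and Zn_diff[intro]: "a \<in> Zn \<Longrightarrow> b \<in> Zn \<Longrightarrow> a - b \<in> Zn"
  and Zn_0[simp]: "0 \<in> Zn"
  unfolding Zn_def by auto

lemma X_add: "X (a + b) = X a * X b"
  unfolding X_def by (simp add: power_int_add xnz prod.distrib)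
lemma X_0[simp]: "X 0 = 1"
  unfolding X_def by simp
lemma X_nz[simp]: "X a \<noteq> 0"
  unfolding X_def by (simp add: xnz)
lemma X_neg: "X (- a) = inverse (X a)"
proof -
  have "X (- a) * X a = 1" by (simp flip: X_add)
  then show ?thesis by (simp add: field_simps)
qed
lemma X_diff: "X (a - b) = X a / X b"
  using X_add[of a "-b"] X_neg[of b] by (simp add: divide_inverse)

lemma B_F[intro]: "B a b \<in> F"
  unfolding B_def using lamF by (auto intro!: Fsum Fmult)

lemma B_self: "B a a = 0"
proof -
  have "B a a = (\<Sum>q<n. \<Sum>p<n. of_int (a p) * lam p q * of_int (a q))"
    unfolding B_def by (rule sum.swap)
  also have "\<dots> = (\<Sum>q<n. \<Sum>p<n. - (of_int (a q) * lam q p * of_int (a p)))"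
  proof (intro sum.cong refl)
    fix p q assume pq: "p \<in> {..<n}" "q \<in> {..<n}"
    have "lam p q = - lam q p" using antisym pq by blast
    then show "of_int (a p) * lam p q * of_int (a q) = - (of_int (a q) * lam q p * of_int (a p))" by (simp add: algebra_simps)
  qed
  also have "\<dots> = - B a a" unfolding B_def by (simp add: sum_negf)
  finally show ?thesis by simp
qed

lemma B_neg2: "B a (- b) = - B a b"
  unfolding B_def by (simp add: sum_negf)

lemma D_anti: "D f g = - D g f"
  unfolding D_def by (subst br_anti) (simp add: mult.commute)
lemma D_mult: "f1 \<noteq> 0 \<Longrightarrow> f2 \<noteq> 0 \<Longrightarrow> g \<noteq> 0 \<Longrightarrow> D (f1 * f2) g = D f1 g + D f2 g"
  unfolding D_def by (simp add: br_leib field_simps)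
lemma D_inv: "f \<noteq> 0 \<Longrightarrow> g \<noteq> 0 \<Longrightarrow> D (inverse f) g = - D f g"
  unfolding D_def by (subst br_inv) (simp_all add: field_simps power2_eq_square)
lemma D_div: "f1 \<noteq> 0 \<Longrightarrow> f2 \<noteq> 0 \<Longrightarrow> g \<noteq> 0 \<Longrightarrow> D (f1 / f2) g = D f1 g - D f2 g"
  by (simp add: divide_inverse D_mult D_inv)
lemma D_const: "c \<in> F \<Longrightarrow> D c g = 0"
  unfolding D_def by (simp add: br_const)
lemma D_mult2: "f1 \<noteq> 0 \<Longrightarrow> f2 \<noteq> 0 \<Longrightarrow> g \<noteq> 0 \<Longrightarrow> D g (f1 * f2) = D g f1 + D g f2"
  using D_mult[of f1 f2 g] D_anti by (metis minus_add_distrib)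
lemma D_div2: "f1 \<noteq> 0 \<Longrightarrow> f2 \<noteq> 0 \<Longrightarrow> g \<noteq> 0 \<Longrightarrow> D g (f1 / f2) = D g f1 - D g f2"
proof -
  assume a: "f1 \<noteq> 0" "f2 \<noteq> 0" "g \<noteq> 0"
  have "D g (f1 / f2) = - D (f1 / f2) g" by (rule D_anti)
  also have "\<dots> = - D f1 g + D f2 g" using D_div[OF a] by simp
  also have "\<dots> = D g f1 - D g f2" using D_anti[of f1 g] D_anti[of f2 g] by simp
  finally show ?thesis .
qed
lemma D_const2: "c \<in> F \<Longrightarrow> D g c = 0"
  using D_const D_anti by (metis neg_equal_0_iff_equal)

lemma D_power: "f \<noteq> 0 \<Longrightarrow> g \<noteq> 0 \<Longrightarrow> D (f ^ k) g = of_nat k * D f g"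
  by (induction k) (simp_all add: D_mult D_const algebra_simps)
lemma D_powi: "f \<noteq> 0 \<Longrightarrow> g \<noteq> 0 \<Longrightarrow> D (f powi k) g = of_int k * D f g"
proof (cases "k \<ge> 0")
  case True
  assume f: "f \<noteq> 0" and g: "g \<noteq> 0"
  obtain m where "k = int m" using True nonneg_eq_int by blast
  then show ?thesis using D_power[OF f g] by simp
next
  case False
  assume f: "f \<noteq> 0" and g: "g \<noteq> 0"
  obtain m where k: "k = - int m" using False by (intro that[of "nat (-k)"]) simp
  have "f powi k = inverse (f ^ m)" using k by (simp add: power_int_minus)
  then show ?thesis using D_power[OF f g, of m] D_inv[of "f^m" g] f g k by simp
qed
lemma D_prod: "(\<And>i. i \<in> I \<Longrightarrow> f i \<noteq> 0) \<Longrightarrow> g \<noteq> 0 \<Longrightarrow> D (prod f I) g = (\<Sum>i\<in>I. D (f i) g)"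
  by (induction I rule: infinite_finite_induct) (simp_all add: D_mult D_const)

lemma D_x: "p < n \<Longrightarrow> q < n \<Longrightarrow> D (x p) (x q) = lam p q"
  unfolding D_def using xnz by (simp add: brx)

lemma D_X_left: "g \<noteq> 0 \<Longrightarrow> D (X a) g = (\<Sum>p<n. of_int (a p) * D (x p) g)"
  unfolding X_def by (subst D_prod) (simp_all add: D_powi xnz power_int_eq_0_iff)

lemma D_X: "D (X a) (X b) = B a b"
proof -
  have "D (X a) (X b) = (\<Sum>p<n. of_int (a p) * D (x p) (X b))" by (simp add: D_X_left)
  also have "\<dots> = (\<Sum>p<n. of_int (a p) * (\<Sum>q<n. of_int (b q) * lam p q))"
  proof (intro sum.cong refl)
    fix p assume p: "p \<in> {..<n}"
    have "D (x p) (X b) = - D (X b) (x p)" by (rule D_anti)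
    also have "\<dots> = - (\<Sum>q<n. of_int (b q) * D (x q) (x p))" using p xnz by (simp add: D_X_left)
    also have "\<dots> = (\<Sum>q<n. of_int (b q) * lam p q)"
      unfolding sum_negf[symmetric]
    proof (intro sum.cong refl)
      fix q assume q: "q \<in> {..<n}"
      have "lam p q = - lam q p" using antisym p q by blast
      then show "- (of_int (b q) * D (x q) (x p)) = of_int (b q) * lam p q" using p q by (simp add: D_x)
    qed
    finally show "of_int (a p) * D (x p) (X b) = of_int (a p) * (\<Sum>q<n. of_int (b q) * lam p q)" by simp
  qed
  also have "\<dots> = B a b" unfolding B_def by (simp add: sum_distrib_left algebra_simps)
  finally show ?thesis .
qed

lemma br_X: "br (X a) (X b) = B a b * X (a + b)"
  using D_X[of a b] unfolding D_def by (simp add: X_add field_simps)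

end


definition pr :: "nat \<Rightarrow> nat" where "pr = enumerate {p. prime p}"

lemma pr_prime: "prime (pr i)"
  unfolding pr_def using enumerate_in_set[OF primes_infinite] by simp
lemma pr_inj: "pr i = pr j \<Longrightarrow> i = j"
  unfolding pr_def using strict_mono_enumerate[OF primes_infinite] by (metis strict_mono_eq)
lemma pr_pos: "pr i > 0"
  using pr_prime prime_gt_0_nat by blast

context qtb begin

definition W :: "(nat \<Rightarrow> int) \<Rightarrow> real" where "W a = (\<Sum>i<n. ln (real (pr i)) * of_int (a i))"

lemma W_add: "W (a + b) = W a + W b"
  unfolding W_def by (simp add: sum.distrib algebra_simps)
lemma W_neg: "W (- a) = - W a"
  unfolding W_def by (simp add: sum_negf)
lemma W_diff: "W (a - b) = W a - W b"
  unfolding W_def by (simp add: sum_subtractf algebra_simps)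
lemma W_0[simp]: "W 0 = 0"
  unfolding W_def by simp

lemma W_inj_aux:
  assumes a: "a \<in> Zn" and W0: "W a = 0" and j: "j < n" and aj: "a j > 0"
  shows False
proof -
  define N1 where "N1 = (\<Prod>i<n. pr i ^ nat (a i))"
  define N2 where "N2 = (\<Prod>i<n. pr i ^ nat (- a i))"
  have lnN1: "ln (real N1) = (\<Sum>i<n. real (nat (a i)) * ln (real (pr i)))"
    unfolding N1_def using pr_pos by (simp add: ln_prod ln_realpow)
  have lnN2: "ln (real N2) = (\<Sum>i<n. real (nat (- a i)) * ln (real (pr i)))"
    unfolding N2_def using pr_pos by (simp add: ln_prod ln_realpow)
  have "ln (real N1) - ln (real N2) = W a"
    unfolding lnN1 lnN2 W_def sum_subtractf[symmetric]
  proof (intro sum.cong refl)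
    fix i
    have "real (nat (a i)) - real (nat (- a i)) = of_int (a i)" by (cases "a i \<ge> 0") auto
    then show "real (nat (a i)) * ln (real (pr i)) - real (nat (- a i)) * ln (real (pr i)) = ln (real (pr i)) * of_int (a i)"
      by (metis left_diff_distrib mult.commute)
  qed
  then have "ln (real N1) = ln (real N2)" using W0 by simp
  moreover have "N1 > 0" "N2 > 0" unfolding N1_def N2_def using pr_pos by auto
  ultimately have "N1 = N2" by simp
  moreover have "pr j dvd N1"
  proof -
    have "pr j dvd pr j ^ nat (a j)" using aj by (simp add: dvd_power)
    also have "\<dots> dvd N1" unfolding N1_def using j by (intro dvd_prodI) auto
    finally show ?thesis .
  qed
  ultimately have "pr j dvd N2" by simp
  then have "\<exists>i\<in>{..<n}. pr j dvd pr i ^ nat (- a i)"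
    unfolding N2_def using prime_dvd_prod_iff[of "{..<n}" "pr j" "\<lambda>i. pr i ^ nat (- a i)"] pr_prime by simp
  then obtain i where i: "i < n" "pr j dvd pr i ^ nat (- a i)" by auto
  have "nat (- a i) \<noteq> 0"
  proof
    assume "nat (- a i) = 0"
    then have "pr j dvd 1" using i by simp
    then show False using pr_prime[of j] by (simp add: prime_nat_iff)
  qed
  then have "pr j dvd pr i" using i prime_dvd_power[OF pr_prime] by blast
  then have "pr j = pr i" using primes_dvd_imp_eq pr_prime by blast
  then have "i = j" using pr_inj by simp
  then show False using aj \<open>nat (- a i) \<noteq> 0\<close> by simp
qed

lemma W_inj: "a \<in> Zn \<Longrightarrow> W a = 0 \<Longrightarrow> a = 0"
proof (rule ccontr)
  assume a: "a \<in> Zn" "W a = 0" "a \<noteq> 0"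
  then obtain j where j: "a j \<noteq> 0" by (auto simp: fun_eq_iff)
  then have jn: "j < n" using a(1) unfolding Zn_def by (cases "j < n") auto
  show False
  proof (cases "a j > 0")
    case True then show ?thesis using W_inj_aux[OF a(1) a(2) jn] by simp
  next
    case False
    then have "(- a) j > 0" using j by simp
    moreover have "- a \<in> Zn" "W (- a) = 0" using a by (auto simp: W_neg)
    ultimately show ?thesis using W_inj_aux jn by blast
  qed
qed

lemma W_eq: "a \<in> Zn \<Longrightarrow> b \<in> Zn \<Longrightarrow> W a = W b \<Longrightarrow> a = b"
  using W_inj[of "a - b"] by (simp add: W_diff Zn_diff)

definition LSP :: "((nat \<Rightarrow> int) \<Rightarrow> bool) \<Rightarrow> 'a set" where
  "LSP P = {h. \<exists>S C. finite S \<and> (\<forall>d\<in>S. d \<in> Zn \<and> P d \<and> C d \<in> F) \<and> h = (\<Sum>d\<in>S. C d * X d)}"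

lemma LSPI: "finite S \<Longrightarrow> (\<And>d. d \<in> S \<Longrightarrow> d \<in> Zn \<and> P d \<and> C d \<in> F) \<Longrightarrow> (\<Sum>d\<in>S. C d * X d) \<in> LSP P"
  unfolding LSP_def by blast

lemma LSPE: "h \<in> LSP P \<Longrightarrow> (\<And>S C. finite S \<Longrightarrow> (\<forall>d\<in>S. d \<in> Zn \<and> P d \<and> C d \<in> F) \<Longrightarrow> h = (\<Sum>d\<in>S. C d * X d) \<Longrightarrow> thesis) \<Longrightarrow> thesis"
  unfolding LSP_def by blast

lemma LSP_0[simp]: "0 \<in> LSP P"
  using LSPI[of "{}" P] by simp

lemma LSP_monom: "c \<in> F \<Longrightarrow> d \<in> Zn \<Longrightarrow> P d \<Longrightarrow> c * X d \<in> LSP P"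
  using LSPI[of "{d}" P "\<lambda>_. c"] by simp

lemma LSP_add: assumes "h1 \<in> LSP P" "h2 \<in> LSP P" shows "h1 + h2 \<in> LSP P"
proof -
  obtain S C where S: "finite S" "\<forall>d\<in>S. d \<in> Zn \<and> P d \<and> C d \<in> F" "h1 = (\<Sum>d\<in>S. C d * X d)"
    using assms(1) by (rule LSPE)
  obtain T E where T: "finite T" "\<forall>d\<in>T. d \<in> Zn \<and> P d \<and> E d \<in> F" "h2 = (\<Sum>d\<in>T. E d * X d)"
    using assms(2) by (rule LSPE)
  define G where "G d = (if d \<in> S then C d else 0) + (if d \<in> T then E d else 0)" for d
  have "(\<Sum>d\<in>S \<union> T. G d * X d) = (\<Sum>d\<in>S \<union> T. if d \<in> S then C d * X d else 0) + (\<Sum>d\<in>S \<union> T. if d \<in> T then E d * X d else 0)"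
    unfolding sum.distrib[symmetric] by (intro sum.cong refl) (simp add: G_def distrib_right)
  also have "\<dots> = h1 + h2" using S T
    by (simp add: sum.inter_restrict[symmetric] Int_absorb1 Int_absorb2 Un_Int_eq)
  finally have eq: "h1 + h2 = (\<Sum>d\<in>S \<union> T. G d * X d)" by simp
  show ?thesis unfolding eq using S T by (intro LSPI) (auto simp: G_def)
qed

lemma LSP_sum: "(\<And>i. i \<in> I \<Longrightarrow> f i \<in> LSP P) \<Longrightarrow> sum f I \<in> LSP P"
  by (induction I rule: infinite_finite_induct) (auto intro: LSP_add)

lemma LSP_mono: "h \<in> LSP P \<Longrightarrow> (\<And>d. d \<in> Zn \<Longrightarrow> P d \<Longrightarrow> Q d) \<Longrightarrow> h \<in> LSP Q"
  unfolding LSP_def by blast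

lemma LSP_smult: assumes "h \<in> LSP P" "c \<in> F" shows "c * h \<in> LSP P"
proof -
  obtain S C where S: "finite S" "\<forall>d\<in>S. d \<in> Zn \<and> P d \<and> C d \<in> F" "h = (\<Sum>d\<in>S. C d * X d)"
    using assms(1) by (rule LSPE)
  have "c * h = (\<Sum>d\<in>S. (c * C d) * X d)" using S by (simp add: sum_distrib_left mult.assoc)
  then show ?thesis using S assms(2) by (auto intro!: LSPI)
qed

lemma LSP_neg: "h \<in> LSP P \<Longrightarrow> - h \<in> LSP P"
  using LSP_smult[of h P "-1"] Fneg[OF F1] by simp
lemma LSP_diff: "h1 \<in> LSP P \<Longrightarrow> h2 \<in> LSP P \<Longrightarrow> h1 - h2 \<in> LSP P"
  using LSP_add[of h1 P "- h2"] LSP_neg by simp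

lemma LSP_mult:
  assumes "h1 \<in> LSP P1" "h2 \<in> LSP P2" and PQ: "\<And>d e. d \<in> Zn \<Longrightarrow> e \<in> Zn \<Longrightarrow> P1 d \<Longrightarrow> P2 e \<Longrightarrow> P3 (d + e)"
  shows "h1 * h2 \<in> LSP P3"
proof -
  obtain S C where S: "finite S" "\<forall>d\<in>S. d \<in> Zn \<and> P1 d \<and> C d \<in> F" "h1 = (\<Sum>d\<in>S. C d * X d)"
    using assms(1) by (rule LSPE)
  obtain T E where T: "finite T" "\<forall>d\<in>T. d \<in> Zn \<and> P2 d \<and> E d \<in> F" "h2 = (\<Sum>d\<in>T. E d * X d)"
    using assms(2) by (rule LSPE)
  have "h1 * h2 = (\<Sum>d\<in>S. \<Sum>e\<in>T. (C d * E e) * X (d + e))"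
    unfolding S(3) T(3) sum_product by (simp add: X_add algebra_simps)
  also have "\<dots> \<in> LSP P3" using S T PQ by (intro LSP_sum LSP_monom) auto
  finally show ?thesis .
qed

lemma LSP_br:
  assumes "h1 \<in> LSP P1" "h2 \<in> LSP P2"
    and PQ: "\<And>d e. d \<in> Zn \<Longrightarrow> e \<in> Zn \<Longrightarrow> P1 d \<Longrightarrow> P2 e \<Longrightarrow> B d e \<noteq> 0 \<Longrightarrow> P3 (d + e)"
  shows "br h1 h2 \<in> LSP P3"
proof -
  obtain S C where S: "finite S" "\<forall>d\<in>S. d \<in> Zn \<and> P1 d \<and> C d \<in> F" "h1 = (\<Sum>d\<in>S. C d * X d)"
    using assms(1) by (rule LSPE)
  obtain T E where T: "finite T" "\<forall>d\<in>T. d \<in> Zn \<and> P2 d \<and> E d \<in> F" "h2 = (\<Sum>d\<in>T. E d * X d)"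
    using assms(2) by (rule LSPE)
  have pt: "br (C d * X d) (E e * X e) = C d * E e * B d e * X (d + e)" if "d \<in> S" "e \<in> T" for d e
  proof -
    have "C d \<in> F" "E e \<in> F" using S T that by auto
    then show ?thesis by (simp add: br_smult br_smult2 br_X)
  qed
  have "br h1 h2 = (\<Sum>d\<in>S. \<Sum>e\<in>T. br (C d * X d) (E e * X e))"
    unfolding S(3) T(3) br_sum br_sum2 by (rule sum.swap)
  also have "\<dots> = (\<Sum>d\<in>S. \<Sum>e\<in>T. (C d * E e * B d e) * X (d + e))"
    using pt by (intro sum.cong refl) auto
  also have "\<dots> \<in> LSP P3"
  proof (intro LSP_sum)
    fix d e assume "d \<in> S" "e \<in> T"
    then show "C d * E e * B d e * X (d + e) \<in> LSP P3"
      using S T PQ by (cases "B d e = 0") (auto intro!: LSP_monom)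
  qed
  finally show ?thesis .
qed

end

context qtb begin

definition toPM :: "(nat \<Rightarrow> int) \<Rightarrow> (nat \<Rightarrow>\<^sub>0 nat)" where
  "toPM b = Abs_poly_mapping (\<lambda>i. if i < n then nat (b i) else 0)"

lemma lookup_toPM: "Poly_Mapping.lookup (toPM b) = (\<lambda>i. if i < n then nat (b i) else 0)"
proof -
  have "finite {i. (if i < n then nat (b i) else 0) \<noteq> 0}"
    by (rule finite_subset[of _ "{..<n}"]) (auto split: if_splits)
  then show ?thesis unfolding toPM_def by simp
qed

lemma keys_toPM: "Poly_Mapping.keys (toPM b) \<subseteq> {..<n}"
  by (auto simp: in_keys_iff lookup_toPM split: if_splits)

lemma mon_eval_toPM: assumes "\<forall>i<n. 0 \<le> b i" shows "mon_eval x (toPM b) = X b"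
proof -
  have "mon_eval x (toPM b) = (\<Prod>i<n. x i ^ Poly_Mapping.lookup (toPM b) i)"
    unfolding mon_eval_def using keys_toPM
    by (intro prod.mono_neutral_left) (auto simp: in_keys_iff)
  also have "\<dots> = (\<Prod>i<n. x i powi b i)"
  proof (intro prod.cong refl)
    fix i assume "i \<in> {..<n}"
    then have "b i = int (nat (b i))" "i < n" using assms by auto
    then show "x i ^ Poly_Mapping.lookup (toPM b) i = x i powi b i"
      by (metis lookup_toPM power_int_of_nat)
  qed
  finally show ?thesis unfolding X_def .
qed

lemma toPM_inj: assumes "b \<in> Zn" "b' \<in> Zn" "\<forall>i<n. 0 \<le> b i" "\<forall>i<n. 0 \<le> b' i" "toPM b = toPM b'"
  shows "b = b'"
proof
  fix i
  show "b i = b' i"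
  proof (cases "i < n")
    case True
    have "Poly_Mapping.lookup (toPM b) i = Poly_Mapping.lookup (toPM b') i" using assms(5) by simp
    then have "nat (b i) = nat (b' i)" using True by (simp add: lookup_toPM)
    moreover have "0 \<le> b i" "0 \<le> b' i" using True assms(3,4) by auto
    ultimately show ?thesis by (metis nat_0_le)
  next
    case False then show ?thesis using assms(1,2) unfolding Zn_def by simp
  qed
qed

lemma ind:
  assumes S: "finite S" "\<forall>d\<in>S. d \<in> Zn \<and> C d \<in> F" and z: "(\<Sum>d\<in>S. C d * X d) = 0" and d0: "d0 \<in> S"
  shows "C d0 = 0"
proof -
  define s where "s = (\<lambda>i. \<Sum>d\<in>S. \<bar>d i\<bar>)"
  have sZ: "s \<in> Zn" using S unfolding s_def Zn_def by (auto intro!: sum.neutral)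
  have nn: "\<forall>i<n. 0 \<le> (d + s) i" if "d \<in> S" for d
  proof (intro allI impI)
    fix i
    have "\<bar>d i\<bar> \<le> s i" unfolding s_def using that S(1) by (intro member_le_sum) auto
    then show "0 \<le> (d + s) i" by simp
  qed
  define p where "p = (\<Sum>d\<in>S. Poly_Mapping.single (toPM (d + s)) (C d))"
  have lk: "Poly_Mapping.lookup p m = (\<Sum>d\<in>S. if toPM (d + s) = m then C d else 0)" for m
    unfolding p_def by (simp add: lookup_sum lookup_single when_def)
  have "poly_eval x p = (\<Sum>d\<in>S. C d * X (d + s))"
    unfolding p_def poly_eval_sum poly_eval_single using nn by (intro sum.cong refl) (simp add: mon_eval_toPM)
  also have "\<dots> = X s * (\<Sum>d\<in>S. C d * X d)" by (simp add: sum_distrib_left X_add algebra_simps)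
  also have "\<dots> = 0" using z by simp
  finally have pe: "poly_eval x p = 0" .
  have "is_poly_over F n p" unfolding is_poly_over_def
  proof (intro conjI allI ballI)
    fix m show "Poly_Mapping.lookup p m \<in> F" unfolding lk using S by (intro Fsum) auto
  next
    fix m assume "m \<in> Poly_Mapping.keys p"
    then have "(\<Sum>d\<in>S. if toPM (d + s) = m then C d else 0) \<noteq> 0" by (simp add: in_keys_iff lk)
    then have "\<exists>d\<in>S. (if toPM (d + s) = m then C d else 0) \<noteq> 0"
    proof (rule contrapos_np)
      assume "\<not> (\<exists>d\<in>S. (if toPM (d + s) = m then C d else 0) \<noteq> 0)"
      then show "(\<Sum>d\<in>S. if toPM (d + s) = m then C d else 0) = 0" by (intro sum.neutral) blast
    qed
    then obtain d where "d \<in> S" "toPM (d + s) = m" by (auto split: if_splits)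
    then show "Poly_Mapping.keys m \<subseteq> {..<n}" using keys_toPM by blast
  qed
  then have "p = 0" using pe by (rule indep)
  then have "0 = Poly_Mapping.lookup p (toPM (d0 + s))" by simp
  also have "\<dots> = (\<Sum>d\<in>S. if d = d0 then C d else 0)"
    unfolding lk
  proof (intro sum.cong refl)
    fix d assume d: "d \<in> S"
    have "toPM (d + s) = toPM (d0 + s) \<longleftrightarrow> d = d0"
    proof
      assume "toPM (d + s) = toPM (d0 + s)"
      then have "d + s = d0 + s" using S d d0 sZ nn[OF d] nn[OF d0] by (intro toPM_inj) auto
      then show "d = d0" by simp
    qed simp
    then show "(if toPM (d + s) = toPM (d0 + s) then C d else 0) = (if d = d0 then C d else 0)" by simp
  qed
  also have "\<dots> = C d0" using S(1) d0 by simp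
  finally show ?thesis by simp
qed

abbreviation Pp where "Pp \<equiv> LSP (\<lambda>d. 0 < W d)"

lemma lead_rep:
  assumes S: "finite S" "\<forall>d\<in>S. d \<in> Zn \<and> C d \<in> F" and d0: "d0 \<in> S" "C d0 \<noteq> 0"
  shows "\<exists>e\<in>S. C e \<noteq> 0 \<and> (\<forall>d\<in>S. C d \<noteq> 0 \<longrightarrow> W e \<le> W d) \<and>
     (\<exists>u\<in>Pp. (\<Sum>d\<in>S. C d * X d) = C e * X e * (1 + u))"
proof -
  define S' where "S' = {d\<in>S. C d \<noteq> 0}"
  have fin: "finite S'" and ne: "S' \<noteq> {}" using S d0 unfolding S'_def by auto
  have "Min (W ` S') \<in> W ` S'" using fin ne by (intro Min_in) auto
  then obtain e where e: "e \<in> S'" "W e = Min (W ` S')" by auto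
  have emin: "\<forall>d\<in>S'. W e \<le> W d" using e fin by simp
  have eS: "e \<in> S" "C e \<noteq> 0" "e \<in> Zn" "C e \<in> F" using e S unfolding S'_def by auto
  have "(\<Sum>d\<in>S. C d * X d) = (\<Sum>d\<in>S'. C d * X d)"
    unfolding S'_def using S(1) by (intro sum.mono_neutral_right) auto
  also have "\<dots> = C e * X e + (\<Sum>d\<in>S' - {e}. C d * X d)"
    using fin e(1) by (simp add: sum.remove)
  also have "\<dots> = C e * X e * (1 + (\<Sum>d\<in>S' - {e}. (C d / C e) * X (d - e)))"
  proof -
    have "(\<Sum>d\<in>S' - {e}. C d * X d) = (\<Sum>d\<in>S' - {e}. C e * X e * ((C d / C e) * X (d - e)))"
      using eS by (intro sum.cong refl) (simp add: X_diff)
    then show ?thesis by (simp add: distrib_left sum_distrib_left)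
  qed
  finally have eq: "(\<Sum>d\<in>S. C d * X d) = C e * X e * (1 + (\<Sum>d\<in>S' - {e}. (C d / C e) * X (d - e)))" .
  have "(\<Sum>d\<in>S' - {e}. (C d / C e) * X (d - e)) \<in> Pp"
  proof (intro LSP_sum LSP_monom)
    fix d assume d: "d \<in> S' - {e}"
    then have dS: "d \<in> Zn" "C d \<in> F" using S unfolding S'_def by auto
    show "C d / C e \<in> F" using dS eS by auto
    show "d - e \<in> Zn" using dS eS by auto
    have "W d \<noteq> W e" using d W_eq[of d e] dS eS by auto
    moreover have "W e \<le> W d" using emin d by auto
    ultimately show "0 < W (d - e)" by (simp add: W_diff)
  qed
  then show ?thesis using eq eS emin unfolding S'_def by auto
qed

lemma LSP_nz_coef: assumes "h \<in> LSP P" "h \<noteq> 0"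
  obtains S C d where "finite S" "\<forall>d\<in>S. d \<in> Zn \<and> P d \<and> C d \<in> F" "h = (\<Sum>d\<in>S. C d * X d)" "d \<in> S" "C d \<noteq> 0"
proof -
  obtain S C where S: "finite S" "\<forall>d\<in>S. d \<in> Zn \<and> P d \<and> C d \<in> F" "h = (\<Sum>d\<in>S. C d * X d)"
    using assms(1) by (rule LSPE)
  have "\<exists>d\<in>S. C d \<noteq> 0" using assms(2) S(3) by (metis (no_types, lifting) mult_eq_0_iff sum.neutral)
  then show ?thesis using S that by blast
qed

lemma lead_LSP: assumes "h \<in> LSP P" "h \<noteq> 0"
  shows "\<exists>c e u. c \<in> F \<and> c \<noteq> 0 \<and> e \<in> Zn \<and> P e \<and> u \<in> Pp \<and> h = c * X e * (1 + u)"
proof -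
  obtain S C d where S: "finite S" "\<forall>d\<in>S. d \<in> Zn \<and> P d \<and> C d \<in> F" "h = (\<Sum>d\<in>S. C d * X d)" "d \<in> S" "C d \<noteq> 0"
    using assms by (rule LSP_nz_coef)
  from lead_rep[of S C d] S obtain e u where "e \<in> S" "C e \<noteq> 0" "u \<in> Pp" "h = C e * X e * (1 + u)" by auto
  then show ?thesis using S by blast
qed

lemma one_plus_nz: assumes "v \<in> Pp" shows "1 + v \<noteq> 0"
proof
  assume z: "1 + v = 0"
  obtain S C where S: "finite S" "\<forall>d\<in>S. d \<in> Zn \<and> 0 < W d \<and> C d \<in> F" "v = (\<Sum>d\<in>S. C d * X d)"
    using assms by (rule LSPE)
  have n0: "0 \<notin> S" using S by auto
  define C' where "C' = C(0 := 1)"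
  have "(\<Sum>d\<in>insert 0 S. C' d * X d) = 1 + v"
    using S n0 unfolding C'_def by (simp add: sum.insert) (intro sum.cong refl, auto)
  then have "C' 0 = 0" using z S by (intro ind[of "insert 0 S" C' 0]) (auto simp: C'_def)
  then show False unfolding C'_def by simp
qed

lemma Pp_mono0: "u \<in> Pp \<Longrightarrow> u \<in> LSP (\<lambda>d. 0 \<le> W d)"
  by (erule LSP_mono) simp

lemma one_LSP: "0 \<le> M \<Longrightarrow> 1 \<in> LSP (\<lambda>d. M \<le> W d) \<Longrightarrow> True" by simp

lemma one_plus_LSP: "u \<in> Pp \<Longrightarrow> 1 + u \<in> LSP (\<lambda>d. 0 \<le> W d)"
  using LSP_monom[of 1 0 "\<lambda>d. 0 \<le> W d"] Pp_mono0 LSP_add by fastforce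

lemma Pp_prod: assumes "u \<in> Pp" "v \<in> Pp" shows "u + v + u * v \<in> Pp"
proof -
  have "u * v \<in> Pp" by (rule LSP_mult[OF assms]) (simp add: W_add)
  then show ?thesis using assms by (intro LSP_add)
qed

lemma uniq_aux:
  assumes c: "c \<in> F" "c \<noteq> 0" "c' \<in> F" "c' \<noteq> 0" and e: "e \<in> Zn" "e' \<in> Zn" and u: "u \<in> Pp" "u' \<in> Pp"
    and eq: "c * X e * (1 + u) = c' * X e' * (1 + u')" and le: "W e \<le> W e'"
  shows "e = e' \<and> c = c'"
proof (cases "W e = W e'")
  case True
  then have ee: "e = e'" using W_eq e by blast
  have "c = c'"
  proof (rule ccontr)
    assume cc: "c \<noteq> c'"
    have "c * (1 + u) = c' * (1 + u')" using eq ee by simp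
    have "(c - c') + (c * u - c' * u') = 0" using \<open>c * (1 + u) = c' * (1 + u')\<close> by (simp add: algebra_simps)
    then have "(c - c') * (1 + (c * u - c' * u') / (c - c')) = 0" using cc by (simp add: distrib_left)
    then have "1 + (c * u - c' * u') / (c - c') = 0" using cc by simp
    moreover have "(c * u - c' * u') / (c - c') \<in> Pp"
    proof -
      have "inverse (c - c') * (c * u - c' * u') \<in> Pp" using c u by (intro LSP_smult LSP_diff) auto
      then show ?thesis by (simp add: divide_inverse mult.commute)
    qed
    ultimately show False using one_plus_nz by blast
  qed
  then show ?thesis using ee by simp
next
  case False
  then have lt: "W e < W e'" using le by simp
  have "X e * (c * (1 + u)) = X e * (c' * X (e' - e) * (1 + u'))"
    using eq by (simp add: X_diff mult.assoc mult.left_commute)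
  then have "c * (1 + u) = c' * X (e' - e) * (1 + u')" by simp
  have gen: "\<And>k. c * (1 + (u - k * X (e' - e) * (1 + u'))) = c * (1 + u) - (c * k) * X (e' - e) * (1 + u')"
    by (simp add: algebra_simps)
  have "c * (1 + (u - (c' / c) * X (e' - e) * (1 + u'))) = c * (1 + u) - (c * (c' / c)) * X (e' - e) * (1 + u')"
    by (rule gen)
  also have "\<dots> = 0" using \<open>c * (1 + u) = c' * X (e' - e) * (1 + u')\<close> c by simp
  finally have "c * (1 + (u - (c' / c) * X (e' - e) * (1 + u'))) = 0" .
  then have "1 + (u - (c' / c) * X (e' - e) * (1 + u')) = 0" using c by simp
  moreover have "u - (c' / c) * X (e' - e) * (1 + u') \<in> Pp"
  proof (intro LSP_diff u)
    have "(c' / c) * X (e' - e) \<in> Pp" using c e lt by (intro LSP_monom) (auto simp: W_diff)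
    then show "(c' / c) * X (e' - e) * (1 + u') \<in> Pp"
      using one_plus_LSP[OF u(2)] by (rule LSP_mult) (auto simp: W_add)
  qed
  ultimately show ?thesis using one_plus_nz by blast
qed

lemma uniq_lead:
  assumes c: "c \<in> F" "c \<noteq> 0" "c' \<in> F" "c' \<noteq> 0" and e: "e \<in> Zn" "e' \<in> Zn" and u: "u \<in> Pp" "u' \<in> Pp"
    and eq: "c * X e * (1 + u) = c' * X e' * (1 + u')"
  shows "e = e' \<and> c = c'"
proof (cases "W e \<le> W e'")
  case True then show ?thesis using uniq_aux[OF c e u eq] by simp
next
  case False then show ?thesis using uniq_aux[OF c(3,4,1,2) e(2,1) u(2,1) eq[symmetric]] by simp
qed

end

context qtb begin

lemma mon_eval_LS: assumes "Poly_Mapping.keys m \<subseteq> {..<n}"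
  shows "\<exists>z\<in>Zn. mon_eval x m = X z"
proof -
  define z where "z = (\<lambda>i. if i < n then int (Poly_Mapping.lookup m i) else 0)"
  have zZ: "z \<in> Zn" unfolding z_def Zn_def by simp
  have "toPM z = m"
  proof (rule poly_mapping_eqI)
    fix i
    show "Poly_Mapping.lookup (toPM z) i = Poly_Mapping.lookup m i"
    proof (cases "i < n")
      case True then show ?thesis by (simp add: lookup_toPM z_def)
    next
      case False
      then have "i \<notin> Poly_Mapping.keys m" using assms by auto
      then show ?thesis using False by (simp add: lookup_toPM in_keys_iff)
    qed
  qed
  moreover have "mon_eval x (toPM z) = X z" by (rule mon_eval_toPM) (simp add: z_def)
  ultimately show ?thesis using zZ by auto
qed

lemma poly_eval_LS: assumes "is_poly_over F n p" shows "poly_eval x p \<in> LSP (\<lambda>_. True)"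
  unfolding poly_eval_def
proof (intro LSP_sum)
  fix m assume m: "m \<in> Poly_Mapping.keys p"
  then obtain z where "z \<in> Zn" "mon_eval x m = X z" using mon_eval_LS assms unfolding is_poly_over_def by blast
  moreover have "Poly_Mapping.lookup p m \<in> F" using assms unfolding is_poly_over_def by blast
  ultimately show "Poly_Mapping.lookup p m * mon_eval x m \<in> LSP (\<lambda>_. True)" by (simp add: LSP_monom)
qed

lemma RF: "\<exists>P R. P \<in> LSP (\<lambda>_. True) \<and> R \<in> LSP (\<lambda>_. True) \<and> R \<noteq> 0 \<and> f = P / R"
  using rep[of f] poly_eval_LS by blast

definition Pgt :: "real \<Rightarrow> 'a set" where
  "Pgt M = {h. \<exists>T v. T \<in> LSP (\<lambda>d. M < W d) \<and> v \<in> Pp \<and> h = T / (1 + v)}"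
definition Pge :: "real \<Rightarrow> 'a set" where
  "Pge M = {h. \<exists>T v. T \<in> LSP (\<lambda>d. M \<le> W d) \<and> v \<in> Pp \<and> h = T / (1 + v)}"
abbreviation Pos where "Pos \<equiv> Pgt 0"

lemma Pgt_LSP: "T \<in> LSP (\<lambda>d. M < W d) \<Longrightarrow> T \<in> Pgt M"
  unfolding Pgt_def by (rule CollectI, rule exI[of _ T], rule exI[of _ 0]) simp
lemma Pge_LSP: "T \<in> LSP (\<lambda>d. M \<le> W d) \<Longrightarrow> T \<in> Pge M"
  unfolding Pge_def by (rule CollectI, rule exI[of _ T], rule exI[of _ 0]) simp
lemma Pgt_0[simp]: "0 \<in> Pgt M"
  using Pgt_LSP[of 0 M] by simp

lemma Pgt_add: assumes "h1 \<in> Pgt M" "h2 \<in> Pgt M" shows "h1 + h2 \<in> Pgt M"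
proof -
  obtain T1 v1 where 1: "T1 \<in> LSP (\<lambda>d. M < W d)" "v1 \<in> Pp" "h1 = T1 / (1 + v1)" using assms(1) unfolding Pgt_def by blast
  obtain T2 v2 where 2: "T2 \<in> LSP (\<lambda>d. M < W d)" "v2 \<in> Pp" "h2 = T2 / (1 + v2)" using assms(2) unfolding Pgt_def by blast
  have nz: "1 + v1 \<noteq> 0" "1 + v2 \<noteq> 0" using 1 2 one_plus_nz by auto
  have "h1 + h2 = (T1 * (1 + v2) + T2 * (1 + v1)) / (1 + (v1 + v2 + v1 * v2))"
    using nz unfolding 1(3) 2(3) by (simp add: field_simps)
  moreover have "T1 * (1 + v2) + T2 * (1 + v1) \<in> LSP (\<lambda>d. M < W d)"
    by (intro LSP_add LSP_mult[OF 1(1) one_plus_LSP[OF 2(2)]] LSP_mult[OF 2(1) one_plus_LSP[OF 1(2)]]) (auto simp: W_add)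
  moreover have "v1 + v2 + v1 * v2 \<in> Pp" using 1 2 by (intro Pp_prod)
  ultimately show ?thesis unfolding Pgt_def by blast
qed

lemma Pgt_smult: assumes "h \<in> Pgt M" "c \<in> F" shows "c * h \<in> Pgt M"
proof -
  obtain T v where 1: "T \<in> LSP (\<lambda>d. M < W d)" "v \<in> Pp" "h = T / (1 + v)" using assms(1) unfolding Pgt_def by blast
  have "c * h = (c * T) / (1 + v)" using 1 by simp
  moreover have "c * T \<in> LSP (\<lambda>d. M < W d)" using 1 assms(2) by (intro LSP_smult)
  ultimately show ?thesis using 1 unfolding Pgt_def by blast
qed

lemma Pgt_neg: "h \<in> Pgt M \<Longrightarrow> - h \<in> Pgt M"
  using Pgt_smult[of h M "-1"] Fneg[OF F1] by simp
lemma Pgt_diff: "h1 \<in> Pgt M \<Longrightarrow> h2 \<in> Pgt M \<Longrightarrow> h1 - h2 \<in> Pgt M"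
  using Pgt_add[of h1 M "- h2"] Pgt_neg by simp
lemma Pgt_sum: "(\<And>i. i \<in> I \<Longrightarrow> f i \<in> Pgt M) \<Longrightarrow> sum f I \<in> Pgt M"
  by (induction I rule: infinite_finite_induct) (auto intro: Pgt_add)

lemma Pgt_mono: assumes "h \<in> Pgt M" "M' \<le> M" shows "h \<in> Pgt M'"
proof -
  obtain T v where 1: "T \<in> LSP (\<lambda>d. M < W d)" "v \<in> Pp" "h = T / (1 + v)" using assms(1) unfolding Pgt_def by blast
  have "T \<in> LSP (\<lambda>d. M' < W d)" using 1(1) by (rule LSP_mono) (use assms(2) in auto)
  then show ?thesis using 1 unfolding Pgt_def by blast
qed

lemma Pos_coef:
  assumes S: "finite S" "\<forall>d\<in>S. d \<in> Zn \<and> C d \<in> F" and P: "(\<Sum>d\<in>S. C d * X d) \<in> Pos"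
    and d0: "d0 \<in> S" "C d0 \<noteq> 0"
  shows "0 < W d0"
proof (rule ccontr)
  assume neg: "\<not> 0 < W d0"
  obtain e u where e: "e \<in> S" "C e \<noteq> 0" "\<forall>d\<in>S. C d \<noteq> 0 \<longrightarrow> W e \<le> W d" "u \<in> Pp"
    "(\<Sum>d\<in>S. C d * X d) = C e * X e * (1 + u)"
    using lead_rep[OF S d0] by blast
  have We: "W e \<le> 0" using e(3) d0 neg by force
  obtain T v where Tv: "T \<in> Pp" "v \<in> Pp" "(\<Sum>d\<in>S. C d * X d) = T / (1 + v)" using P unfolding Pgt_def by blast
  have nz: "1 + v \<noteq> 0" "1 + u \<noteq> 0" using Tv e one_plus_nz by auto
  have TT: "T = C e * X e * (1 + (u + v + u * v))"
    using Tv(3) e(5) nz by (simp add: field_simps)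
  have "T \<noteq> 0" using TT e(2) one_plus_nz[OF Pp_prod[OF e(4) Tv(2)]] by simp
  then obtain c' e' u' where l: "c' \<in> F" "c' \<noteq> 0" "e' \<in> Zn" "0 < W e'" "u' \<in> Pp" "T = c' * X e' * (1 + u')"
    using lead_LSP[OF Tv(1)] by blast
  have "e = e'" using uniq_lead[of "C e" c' e e' "u + v + u * v" u'] e S l TT Pp_prod[OF e(4) Tv(2)] by auto
  then show False using We l(4) by simp
qed

lemma Pos_F: assumes "c \<in> F" "c \<in> Pos" shows "c = 0"
proof (rule ccontr)
  assume c: "c \<noteq> 0"
  have "(\<Sum>d\<in>{0}. (\<lambda>_. c) d * X d) \<in> Pos" using assms by simp
  then have "0 < W 0" using Pos_coef[of "{0}" "\<lambda>_. c" 0] assms c by simp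
  then show False by simp
qed

lemma Dec: assumes "f \<noteq> 0"
  shows "\<exists>c e u v. c \<in> F \<and> c \<noteq> 0 \<and> e \<in> Zn \<and> u \<in> Pp \<and> v \<in> Pp \<and> f = c * X e * ((1 + u) / (1 + v))"
proof -
  obtain P R where PR: "P \<in> LSP (\<lambda>_. True)" "R \<in> LSP (\<lambda>_. True)" "R \<noteq> 0" "f = P / R" using RF by blast
  have "P \<noteq> 0" using assms PR by auto
  then obtain c1 e1 u1 where 1: "c1 \<in> F" "c1 \<noteq> 0" "e1 \<in> Zn" "u1 \<in> Pp" "P = c1 * X e1 * (1 + u1)"
    using lead_LSP[OF PR(1)] by blast
  obtain c2 e2 u2 where 2: "c2 \<in> F" "c2 \<noteq> 0" "e2 \<in> Zn" "u2 \<in> Pp" "R = c2 * X e2 * (1 + u2)"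
    using lead_LSP[OF PR(2) PR(3)] by blast
  have nz: "1 + u2 \<noteq> 0" using one_plus_nz 2 by auto
  have "f = (c1 / c2) * X (e1 - e2) * ((1 + u1) / (1 + u2))"
    unfolding PR(4) 1(5) 2(5) using 2 nz by (simp add: X_diff field_simps)
  moreover have "c1 / c2 \<in> F" "c1 / c2 \<noteq> 0" "e1 - e2 \<in> Zn" using 1 2 by auto
  ultimately show ?thesis using 1 2 by blast
qed

end

context qtb begin

lemma X_LSP: "e \<in> Zn \<Longrightarrow> X e \<in> LSP (\<lambda>d. d = e)"
  using LSP_monom[of 1 e "\<lambda>d. d = e"] by simp

lemma DX1: assumes e: "e \<in> Zn" and u: "u \<in> Pp" shows "D (X e) (1 + u) \<in> Pos"
proof -
  have nz: "1 + u \<noteq> 0" using one_plus_nz u by auto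
  have "D (X e) (1 + u) = (X (- e) * br (X e) u) / (1 + u)"
    unfolding D_def using nz by (simp add: br_add2 X_neg field_simps)
  moreover have "X (- e) * br (X e) u \<in> Pp"
  proof (rule LSP_mult[OF X_LSP])
    show "- e \<in> Zn" using e by auto
    show "br (X e) u \<in> LSP (\<lambda>d. W e < W d)"
      by (rule LSP_br[OF X_LSP[OF e] u]) (simp add: W_add)
    show "\<And>d d'. d \<in> Zn \<Longrightarrow> d' \<in> Zn \<Longrightarrow> d = - e \<Longrightarrow> W e < W d' \<Longrightarrow> 0 < W (d + d')"
      by (simp add: W_add W_neg W_diff)
  qed
  ultimately show ?thesis using u unfolding Pgt_def by blast
qed

lemma DUU: assumes u: "u \<in> Pp" and v: "v \<in> Pp" shows "D (1 + u) (1 + v) \<in> Pos"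
proof -
  have nz: "1 + u \<noteq> 0" "1 + v \<noteq> 0" using one_plus_nz u v by auto
  have "D (1 + u) (1 + v) = br u v / (1 + (u + v + u * v))"
    unfolding D_def using nz by (simp add: br_add br_add2 algebra_simps)
  moreover have "br u v \<in> Pp" by (rule LSP_br[OF u v]) (simp add: W_add)
  moreover have "u + v + u * v \<in> Pp" using u v by (rule Pp_prod)
  ultimately show ?thesis unfolding Pgt_def by blast
qed

lemma DXg: assumes e: "e \<in> Zn" and u: "u \<in> Pp" and v: "v \<in> Pp"
  shows "D (X e) ((1 + u) / (1 + v)) \<in> Pos"
proof -
  have nz: "1 + u \<noteq> 0" "1 + v \<noteq> 0" using one_plus_nz u v by auto
  show ?thesis using D_div2[OF nz, of "X e"] DX1[OF e u] DX1[OF e v] by (simp add: Pgt_diff)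
qed

lemma DgX: assumes e: "e \<in> Zn" and u: "u \<in> Pp" and v: "v \<in> Pp"
  shows "D ((1 + u) / (1 + v)) (X e) \<in> Pos"
proof -
  have "D ((1 + u) / (1 + v)) (X e) = - D (X e) ((1 + u) / (1 + v))" by (rule D_anti)
  then show ?thesis using DXg[OF assms] Pgt_neg by simp
qed

lemma Dgg: assumes u: "u \<in> Pp" and v: "v \<in> Pp" and u': "u' \<in> Pp" and v': "v' \<in> Pp"
  shows "D ((1 + u) / (1 + v)) ((1 + u') / (1 + v')) \<in> Pos"
proof -
  have nz: "1 + u \<noteq> 0" "1 + v \<noteq> 0" "1 + u' \<noteq> 0" "1 + v' \<noteq> 0" using one_plus_nz u v u' v' by auto
  have nzg: "(1 + u') / (1 + v') \<noteq> 0" using nz by simp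
  have "D ((1 + u) / (1 + v)) ((1 + u') / (1 + v')) =
      (D (1 + u) (1 + u') - D (1 + u) (1 + v')) - (D (1 + v) (1 + u') - D (1 + v) (1 + v'))"
    using nz nzg by (simp add: D_div D_div2)
  also have "\<dots> \<in> Pos" using assms by (intro Pgt_diff DUU)
  finally show ?thesis .
qed

lemma Dmain:
  assumes c: "c \<in> F" "c \<noteq> 0" "c' \<in> F" "c' \<noteq> 0" and e: "e \<in> Zn" "e' \<in> Zn"
    and u: "u \<in> Pp" "v \<in> Pp" "u' \<in> Pp" "v' \<in> Pp"
  shows "D (c * X e * ((1 + u) / (1 + v))) (c' * X e' * ((1 + u') / (1 + v'))) - B e e' \<in> Pos"
proof -
  let ?g = "(1 + u) / (1 + v)" and ?g' = "(1 + u') / (1 + v')"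
  have nz: "1 + u \<noteq> 0" "1 + v \<noteq> 0" "1 + u' \<noteq> 0" "1 + v' \<noteq> 0" using one_plus_nz u by auto
  have g: "?g \<noteq> 0" "?g' \<noteq> 0" using nz by auto
  let ?y' = "c' * X e' * ?g'"
  have y': "?y' \<noteq> 0" using c g by simp
  have Xnz: "X e \<noteq> 0" "X e' \<noteq> 0" by simp_all
  have s1: "D (c * X e * ?g) ?y' = D (c * X e) ?y' + D ?g ?y'" by (rule D_mult) (use c g y' in auto)
  have s2: "D (c * X e) ?y' = D c ?y' + D (X e) ?y'" by (rule D_mult) (use c y' in auto)
  have s3: "D c ?y' = 0" using c by (simp add: D_const)
  have s4: "D (X e) ?y' = D (X e) (c' * X e') + D (X e) ?g'" by (rule D_mult2) (use c g in auto)
  have s5: "D (X e) (c' * X e') = D (X e) c' + D (X e) (X e')" by (rule D_mult2) (use c in auto)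
  have s6: "D (X e) c' = 0" using c by (simp add: D_const2)
  have s7: "D ?g ?y' = D ?g (c' * X e') + D ?g ?g'" by (rule D_mult2) (use c g in auto)
  have s8: "D ?g (c' * X e') = D ?g c' + D ?g (X e')" by (rule D_mult2) (use c g in auto)
  have s9: "D ?g c' = 0" using c by (simp add: D_const2)
  have "D (c * X e * ?g) ?y' - B e e' = D (X e) ?g' + (D ?g (X e') + D ?g ?g')"
    unfolding s1 s2 s3 s4 s5 s6 s7 s8 s9 D_X by simp
  also have "\<dots> \<in> Pos" using assms by (intro Pgt_add DXg DgX Dgg)
  finally show ?thesis .
qed

end

context qtb begin

lemma bounded_below: assumes "h \<in> LSP P" shows "\<exists>b. h \<in> LSP (\<lambda>d. b \<le> W d)"
proof -
  obtain S C where S: "finite S" "\<forall>d\<in>S. d \<in> Zn \<and> P d \<and> C d \<in> F" "h = (\<Sum>d\<in>S. C d * X d)"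
    using assms by (rule LSPE)
  define b where "b = (if S = {} then 0 else Min (W ` S))"
  have "h \<in> LSP (\<lambda>d. b \<le> W d)" unfolding S(3) using S unfolding b_def by (intro LSPI) auto
  then show ?thesis by blast
qed

lemma Pp_bounded: assumes "v \<in> Pp" shows "\<exists>\<delta>>0. v \<in> LSP (\<lambda>d. \<delta> \<le> W d)"
proof -
  obtain S C where S: "finite S" "\<forall>d\<in>S. d \<in> Zn \<and> 0 < W d \<and> C d \<in> F" "v = (\<Sum>d\<in>S. C d * X d)"
    using assms by (rule LSPE)
  define b where "b = (if S = {} then 1 else Min (W ` S))"
  have bpos: "b > 0" unfolding b_def using S by auto
  have "v \<in> LSP (\<lambda>d. b \<le> W d)" unfolding S(3) using S unfolding b_def by (intro LSPI) auto
  then show ?thesis using bpos by blast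
qed

lemma LSP_power: assumes "h \<in> LSP (\<lambda>d. \<delta> \<le> W d)" shows "h ^ N \<in> LSP (\<lambda>d. real N * \<delta> \<le> W d)"
proof (induction N)
  case 0
  show ?case using LSP_monom[of 1 0 "\<lambda>d. real 0 * \<delta> \<le> W d"] by simp
next
  case (Suc N)
  have "h * h ^ N \<in> LSP (\<lambda>d. real (Suc N) * \<delta> \<le> W d)"
    by (rule LSP_mult[OF assms Suc]) (simp add: W_add algebra_simps)
  then show ?case by simp
qed

lemma geom: "(1 + v) * (\<Sum>k<N. (- v) ^ k) = 1 - (- v) ^ N" for v :: 'a
  by (induction N) (simp_all add: algebra_simps)

lemma onePp_mult: assumes "u \<in> Pp" "v \<in> Pp" shows "\<exists>w\<in>Pp. (1 + u) * (1 + v) = 1 + w"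
  using Pp_prod[OF assms] by (intro bexI[of _ "u + v + u * v"]) (simp_all add: algebra_simps)

lemma std_form: "\<exists>T v b. T \<in> LSP (\<lambda>d. b \<le> W d) \<and> v \<in> Pp \<and> f = T / (1 + v)"
proof -
  obtain P0 R where PR: "P0 \<in> LSP (\<lambda>_. True)" "R \<in> LSP (\<lambda>_. True)" "R \<noteq> 0" "f = P0 / R" using RF by blast
  obtain c e v where R: "c \<in> F" "c \<noteq> 0" "e \<in> Zn" "v \<in> Pp" "R = c * X e * (1 + v)"
    using lead_LSP[OF PR(2,3)] by blast
  have T0: "(inverse c * X (- e)) * P0 \<in> LSP (\<lambda>_. True)"
    using R PR by (intro LSP_mult[OF LSP_monom[of "inverse c" "- e" "\<lambda>_. True"] PR(1)]) auto
  have nz: "1 + v \<noteq> 0" using one_plus_nz R by auto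
  have "f = ((inverse c * X (- e)) * P0) / (1 + v)"
    unfolding PR(4) R(5) using R nz by (simp add: X_neg field_simps)
  moreover obtain b where "(inverse c * X (- e)) * P0 \<in> LSP (\<lambda>d. b \<le> W d)" using bounded_below[OF T0] by blast
  ultimately show ?thesis using R by blast
qed

lemma in_Pge: "\<exists>b. f \<in> Pge b"
  using std_form[of f] unfolding Pge_def by blast

lemma approx: "\<exists>P\<in>LSP (\<lambda>_. True). f - P \<in> Pgt M"
proof -
  obtain T v b where Tv: "T \<in> LSP (\<lambda>d. b \<le> W d)" "v \<in> Pp" "f = T / (1 + v)" using std_form by blast
  obtain \<delta> where d: "\<delta> > 0" "v \<in> LSP (\<lambda>d. \<delta> \<le> W d)" using Pp_bounded[OF Tv(2)] by blast
  obtain N where N: "M - b < real N * \<delta>" using ex_less_of_nat_mult[OF d(1)] by blast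
  have nz: "1 + v \<noteq> 0" using one_plus_nz Tv by auto
  define Q where "Q = T * (\<Sum>k<N. (- v) ^ k)"
  have "Q \<in> LSP (\<lambda>_. True)"
  proof -
    have "T \<in> LSP (\<lambda>_. True)" using Tv(1) by (rule LSP_mono) simp
    moreover have "(\<Sum>k<N. (- v) ^ k) \<in> LSP (\<lambda>_. True)"
    proof (intro LSP_sum)
      fix k
      have "- v \<in> LSP (\<lambda>d. \<delta> \<le> W d)" using d(2) by (rule LSP_neg)
      then show "(- v) ^ k \<in> LSP (\<lambda>_. True)" by (intro LSP_mono[OF LSP_power]) auto
    qed
    ultimately show ?thesis unfolding Q_def by (rule LSP_mult) simp
  qed
  moreover have "f - Q = (T * (- v) ^ N) / (1 + v)"
  proof -
    have "f - Q = (T - T * ((1 + v) * (\<Sum>k<N. (- v) ^ k))) / (1 + v)"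
      unfolding Tv(3) Q_def using nz by (simp add: field_simps)
    also have "\<dots> = (T * (- v) ^ N) / (1 + v)" unfolding geom by (simp add: algebra_simps)
    finally show ?thesis .
  qed
  moreover have "T * (- v) ^ N \<in> LSP (\<lambda>d. M < W d)"
  proof -
    have "- v \<in> LSP (\<lambda>d. \<delta> \<le> W d)" using d(2) by (rule LSP_neg)
    then have "(- v) ^ N \<in> LSP (\<lambda>d. real N * \<delta> \<le> W d)" by (rule LSP_power)
    then show ?thesis by (rule LSP_mult[OF Tv(1)]) (use N in \<open>auto simp: W_add\<close>)
  qed
  ultimately show ?thesis using Tv(2) unfolding Pgt_def by blast
qed

lemma BrB: assumes h1: "h1 \<in> Pgt a" and h2: "h2 \<in> Pge b" shows "br h1 h2 \<in> Pgt (a + b)"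
proof -
  obtain T1 v1 where 1: "T1 \<in> LSP (\<lambda>d. a < W d)" "v1 \<in> Pp" "h1 = T1 / (1 + v1)" using h1 unfolding Pgt_def by blast
  obtain T2 v2 where 2: "T2 \<in> LSP (\<lambda>d. b \<le> W d)" "v2 \<in> Pp" "h2 = T2 / (1 + v2)" using h2 unfolding Pge_def by blast
  define S1 where "S1 = 1 + v1"
  define S2 where "S2 = 1 + v2"
  have nz: "S1 \<noteq> 0" "S2 \<noteq> 0" using one_plus_nz 1 2 unfolding S1_def S2_def by auto
  have S: "S1 \<in> LSP (\<lambda>d. 0 \<le> W d)" "S2 \<in> LSP (\<lambda>d. 0 \<le> W d)" unfolding S1_def S2_def using 1 2 by (auto intro: one_plus_LSP)
  have b1: "br T1 S2 = br T1 v2" unfolding S2_def by (simp add: br_add2)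
  have b2: "br S1 T2 = br v1 T2" unfolding S1_def by (simp add: br_add)
  have b3: "br S1 S2 = br v1 v2" unfolding S1_def S2_def by (simp add: br_add br_add2)
  define N where "N = S1 * S2 * br T1 T2 - S1 * T2 * br T1 v2 - T1 * S2 * br v1 T2 + T1 * T2 * br v1 v2"
  have "br h1 h2 = br (T1 / S1) (T2 / S2)" unfolding 1(3) 2(3) S1_def S2_def ..
  also have "\<dots> = N / ((S1 * S1) * (S2 * S2))"
    unfolding br_quot[OF nz(1)] br_quot2[OF nz(2)] b1 b2 b3 N_def using nz
    by (simp add: field_simps power2_eq_square)
  finally have eq: "br h1 h2 = N / ((S1 * S1) * (S2 * S2))" .
  have "N \<in> LSP (\<lambda>d. a + b < W d)"
    unfolding N_def
  proof (intro LSP_add LSP_diff)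
    have "br T1 T2 \<in> LSP (\<lambda>d. a + b < W d)" by (rule LSP_br[OF 1(1) 2(1)]) (simp add: W_add)
    then have "S2 * br T1 T2 \<in> LSP (\<lambda>d. a + b < W d)" by (rule LSP_mult[OF S(2)]) (auto simp: W_add)
    then show "S1 * S2 * br T1 T2 \<in> LSP (\<lambda>d. a + b < W d)" unfolding mult.assoc by (rule LSP_mult[OF S(1)]) (auto simp: W_add)
    have "br T1 v2 \<in> LSP (\<lambda>d. a < W d)" by (rule LSP_br[OF 1(1) 2(2)]) (simp add: W_add)
    then have "T2 * br T1 v2 \<in> LSP (\<lambda>d. a + b < W d)" by (rule LSP_mult[OF 2(1)]) (auto simp: W_add)
    then show "S1 * T2 * br T1 v2 \<in> LSP (\<lambda>d. a + b < W d)" unfolding mult.assoc by (rule LSP_mult[OF S(1)]) (auto simp: W_add)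
    have "br v1 T2 \<in> LSP (\<lambda>d. b < W d)" by (rule LSP_br[OF 1(2) 2(1)]) (simp add: W_add)
    then have "S2 * br v1 T2 \<in> LSP (\<lambda>d. b < W d)" by (rule LSP_mult[OF S(2)]) (auto simp: W_add)
    then show "T1 * S2 * br v1 T2 \<in> LSP (\<lambda>d. a + b < W d)" unfolding mult.assoc by (rule LSP_mult[OF 1(1)]) (auto simp: W_add)
    have "br v1 v2 \<in> Pp" by (rule LSP_br[OF 1(2) 2(2)]) (simp add: W_add)
    then have "T2 * br v1 v2 \<in> LSP (\<lambda>d. b < W d)" by (rule LSP_mult[OF 2(1)]) (auto simp: W_add)
    then show "T1 * T2 * br v1 v2 \<in> LSP (\<lambda>d. a + b < W d)" unfolding mult.assoc by (rule LSP_mult[OF 1(1)]) (auto simp: W_add)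
  qed
  moreover obtain w1 where w1: "w1 \<in> Pp" "S1 * S1 = 1 + w1" using onePp_mult[OF 1(2) 1(2)] unfolding S1_def by blast
  moreover obtain w2 where w2: "w2 \<in> Pp" "S2 * S2 = 1 + w2" using onePp_mult[OF 2(2) 2(2)] unfolding S2_def by blast
  moreover obtain w where w: "w \<in> Pp" "(1 + w1) * (1 + w2) = 1 + w" using onePp_mult[OF w1(1) w2(1)] by blast
  ultimately show ?thesis unfolding eq Pgt_def by auto
qed

end

context qtb begin

definition coef0 :: "(nat \<Rightarrow> int) set \<Rightarrow> ((nat \<Rightarrow> int) \<Rightarrow> 'a) \<Rightarrow> 'a" where
  "coef0 S C = (if 0 \<in> S then C 0 else 0)"

definition goodrep :: "'a \<Rightarrow> (nat \<Rightarrow> int) set \<Rightarrow> ((nat \<Rightarrow> int) \<Rightarrow> 'a) \<Rightarrow> bool" where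
  "goodrep f S C \<longleftrightarrow> finite S \<and> (\<forall>d\<in>S. d \<in> Zn \<and> C d \<in> F) \<and> f - (\<Sum>d\<in>S. C d * X d) \<in> Pos"

definition ct :: "'a \<Rightarrow> 'a" where
  "ct f = (SOME c. \<exists>S C. goodrep f S C \<and> c = coef0 S C)"

lemma sum_union_rep: assumes "finite S" "finite T"
  shows "(\<Sum>d\<in>S \<union> T. ((if d \<in> S then C d else 0) + (if d \<in> T then E d else 0)) * X d)
    = (\<Sum>d\<in>S. C d * X d) + (\<Sum>d\<in>T. E d * X d)"
proof -
  have "(\<Sum>d\<in>S \<union> T. ((if d \<in> S then C d else 0) + (if d \<in> T then E d else 0)) * X d)
     = (\<Sum>d\<in>S \<union> T. if d \<in> S then C d * X d else 0) + (\<Sum>d\<in>S \<union> T. if d \<in> T then E d * X d else 0)"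
    unfolding sum.distrib[symmetric] by (intro sum.cong refl) (simp add: distrib_right)
  also have "\<dots> = (\<Sum>d\<in>S. C d * X d) + (\<Sum>d\<in>T. E d * X d)" using assms
    by (simp add: sum.inter_restrict[symmetric] Int_absorb1 Int_absorb2 Un_Int_eq)
  finally show ?thesis .
qed

lemma coef0_unique:
  assumes S: "finite S" "\<forall>d\<in>S. d \<in> Zn \<and> C d \<in> F" and T: "finite T" "\<forall>d\<in>T. d \<in> Zn \<and> E d \<in> F"
    and P: "(\<Sum>d\<in>S. C d * X d) - (\<Sum>d\<in>T. E d * X d) \<in> Pos"
  shows "coef0 S C = coef0 T E"
proof -
  define G where "G d = (if d \<in> S then C d else 0) + (if d \<in> T then - E d else 0)" for d
  have "(\<Sum>d\<in>S \<union> T. G d * X d) = (\<Sum>d\<in>S. C d * X d) + (\<Sum>d\<in>T. - E d * X d)"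
    using sum_union_rep[OF S(1) T(1), of C "\<lambda>d. - E d"] unfolding G_def by simp
  also have "\<dots> = (\<Sum>d\<in>S. C d * X d) - (\<Sum>d\<in>T. E d * X d)" by (simp add: sum_negf)
  finally have eq: "(\<Sum>d\<in>S \<union> T. G d * X d) \<in> Pos" using P by simp
  have "G 0 = 0"
  proof (rule ccontr)
    assume g: "G 0 \<noteq> 0"
    then have "0 \<in> S \<union> T" unfolding G_def by (auto split: if_splits)
    have GF: "\<forall>d\<in>S \<union> T. d \<in> Zn \<and> G d \<in> F" using S T unfolding G_def by auto
    have "0 < W 0" by (rule Pos_coef[of "S \<union> T" G 0]) (use S T GF eq g \<open>0 \<in> S \<union> T\<close> in auto)
    then show False by simp
  qed
  then show ?thesis unfolding coef0_def G_def by (auto split: if_splits)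
qed

lemma goodrep_ex: "\<exists>S C. goodrep f S C"
proof -
  obtain P where P: "P \<in> LSP (\<lambda>_. True)" "f - P \<in> Pos" using approx by blast
  obtain S C where S: "finite S" "\<forall>d\<in>S. d \<in> Zn \<and> True \<and> C d \<in> F" "P = (\<Sum>d\<in>S. C d * X d)"
    using P(1) by (rule LSPE)
  then show ?thesis using P unfolding goodrep_def by auto
qed

lemma ct_eq: assumes "goodrep f S C" shows "ct f = coef0 S C"
proof -
  have "\<exists>c. \<exists>S C. goodrep f S C \<and> c = coef0 S C" using assms by blast
  then have "\<exists>S C. goodrep f S C \<and> (SOME c. \<exists>S C. goodrep f S C \<and> c = coef0 S C) = coef0 S C"
    by (rule someI_ex)
  then obtain S' C' where g: "goodrep f S' C'" "ct f = coef0 S' C'"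
    unfolding ct_def by blast
  have "(\<Sum>d\<in>S'. C' d * X d) - (\<Sum>d\<in>S. C d * X d) =
      (f - (\<Sum>d\<in>S. C d * X d)) - (f - (\<Sum>d\<in>S'. C' d * X d))" by simp
  also have "\<dots> \<in> Pos" by (rule Pgt_diff) (use assms g(1) in \<open>auto simp: goodrep_def\<close>)
  finally have "coef0 S' C' = coef0 S C" using assms g(1) unfolding goodrep_def by (intro coef0_unique) auto
  then show ?thesis using g by simp
qed

lemma ct_add: "ct (f + g) = ct f + ct g"
proof -
  obtain S C where S: "goodrep f S C" using goodrep_ex by blast
  obtain T E where T: "goodrep g T E" using goodrep_ex by blast
  define G where "G d = (if d \<in> S then C d else 0) + (if d \<in> T then E d else 0)" for d
  have fin: "finite S" "finite T" using S T unfolding goodrep_def by auto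
  have eq: "(\<Sum>d\<in>S \<union> T. G d * X d) = (\<Sum>d\<in>S. C d * X d) + (\<Sum>d\<in>T. E d * X d)"
    unfolding G_def using fin by (rule sum_union_rep)
  have "goodrep (f + g) (S \<union> T) G"
    unfolding goodrep_def
  proof (intro conjI)
    show "finite (S \<union> T)" using fin by simp
    show "\<forall>d\<in>S \<union> T. d \<in> Zn \<and> G d \<in> F" using S T unfolding goodrep_def G_def by auto
    have "f + g - (\<Sum>d\<in>S \<union> T. G d * X d) = (f - (\<Sum>d\<in>S. C d * X d)) + (g - (\<Sum>d\<in>T. E d * X d))"
      unfolding eq by simp
    also have "\<dots> \<in> Pos" using S T unfolding goodrep_def by (intro Pgt_add) auto
    finally show "f + g - (\<Sum>d\<in>S \<union> T. G d * X d) \<in> Pos" .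
  qed
  then have "ct (f + g) = coef0 (S \<union> T) G" by (rule ct_eq)
  also have "\<dots> = coef0 S C + coef0 T E" unfolding coef0_def G_def by auto
  also have "\<dots> = ct f + ct g" using ct_eq[OF S] ct_eq[OF T] by simp
  finally show ?thesis .
qed

lemma ct_smult: assumes c: "c \<in> F" shows "ct (c * f) = c * ct f"
proof -
  obtain S C where S: "goodrep f S C" using goodrep_ex by blast
  have "goodrep (c * f) S (\<lambda>d. c * C d)"
    unfolding goodrep_def
  proof (intro conjI)
    show "finite S" "\<forall>d\<in>S. d \<in> Zn \<and> c * C d \<in> F" using S c unfolding goodrep_def by auto
    have "c * f - (\<Sum>d\<in>S. c * C d * X d) = c * (f - (\<Sum>d\<in>S. C d * X d))"
      by (simp add: sum_distrib_left right_diff_distrib mult.assoc)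
    also have "\<dots> \<in> Pos" using S c unfolding goodrep_def by (intro Pgt_smult) auto
    finally show "c * f - (\<Sum>d\<in>S. c * C d * X d) \<in> Pos" .
  qed
  then have "ct (c * f) = coef0 S (\<lambda>d. c * C d)" by (rule ct_eq)
  also have "\<dots> = c * coef0 S C" unfolding coef0_def by simp
  finally show ?thesis using ct_eq[OF S] by simp
qed

lemma ct_Pos: assumes "h \<in> Pos" shows "ct h = 0"
proof -
  have "goodrep h {} (\<lambda>_. 0)" unfolding goodrep_def using assms by simp
  then show ?thesis using ct_eq unfolding coef0_def by fastforce
qed

lemma ct_zero[simp]: "ct 0 = 0"
  using ct_Pos[of 0] by simp

lemma ct_sum: "ct (sum g I) = (\<Sum>i\<in>I. ct (g i))"
  by (induction I rule: infinite_finite_induct) (auto simp: ct_add)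

lemma ct_const: assumes "a \<in> F" shows "ct a = a"
proof -
  have "goodrep a {0} (\<lambda>_. a)" unfolding goodrep_def using assms by simp
  then show ?thesis using ct_eq unfolding coef0_def by fastforce
qed

lemma ct_nz: assumes "h \<in> LSP (\<lambda>d. d \<noteq> 0)" shows "ct h = 0"
proof -
  obtain S C where S: "finite S" "\<forall>d\<in>S. d \<in> Zn \<and> d \<noteq> 0 \<and> C d \<in> F" "h = (\<Sum>d\<in>S. C d * X d)"
    using assms by (rule LSPE)
  have "goodrep h S C" unfolding goodrep_def using S by simp
  then have "ct h = coef0 S C" by (rule ct_eq)
  also have "\<dots> = 0" using S unfolding coef0_def by auto
  finally show ?thesis .
qed

lemma ct_br: "ct (br f g) = 0"
proof -
  obtain bg where bg: "g \<in> Pge bg" using in_Pge by blast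
  obtain P where P: "P \<in> LSP (\<lambda>_. True)" "f - P \<in> Pgt (- bg)" using approx by blast
  obtain bP where bP: "P \<in> LSP (\<lambda>d. bP \<le> W d)" using bounded_below[OF P(1)] by blast
  obtain Q where Q: "Q \<in> LSP (\<lambda>_. True)" "g - Q \<in> Pgt (- bP)" using approx by blast
  have eq: "br f g = br P Q + br (f - P) g - br (g - Q) P"
    using br_anti[of g P] br_anti[of Q P] by (simp add: br_diff)
  have 1: "br (f - P) g \<in> Pos" using BrB[OF P(2) bg] by simp
  have 2: "br (g - Q) P \<in> Pos" using BrB[OF Q(2) Pge_LSP[OF bP]] by simp
  have 3: "br P Q \<in> LSP (\<lambda>d. d \<noteq> 0)"
  proof (rule LSP_br[OF P(1) Q(1)])
    fix d e :: "nat \<Rightarrow> int" assume "B d e \<noteq> 0"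
    then show "d + e \<noteq> 0"
    proof (rule contrapos_nn)
      assume "d + e = 0"
      then have "e = - d" by (simp add: eq_neg_iff_add_eq_0 add.commute)
      then show "B d e = 0" by (simp add: B_neg2 B_self)
    qed
  qed
  show ?thesis unfolding eq
    using ct_add[of "br P Q + br (f - P) g" "- br (g - Q) P"] ct_add[of "br P Q" "br (f - P) g"]
      ct_nz[OF 3] ct_Pos[OF 1] ct_Pos[OF Pgt_neg[OF 2]] by simp
qed

theorem part_a: "bracket_span F br \<inter> F = {0}"
proof
  show "{0} \<subseteq> bracket_span F br \<inter> F"
    unfolding bracket_span_def by (auto intro!: exI[of _ "0::nat"])
next
  show "bracket_span F br \<inter> F \<subseteq> {0}"
  proof
    fix h assume h: "h \<in> bracket_span F br \<inter> F"
    then obtain m :: nat and c f g where hm: "h = (\<Sum>i<m. c i * br (f i) (g i))" "\<forall>i<m. c i \<in> F"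
      unfolding bracket_span_def by blast
    have "ct h = (\<Sum>i<m. c i * ct (br (f i) (g i)))" unfolding hm(1) ct_sum
      using hm(2) by (intro sum.cong refl) (simp add: ct_smult)
    also have "\<dots> = 0" by (simp add: ct_br)
    finally have "ct h = 0" .
    moreover have "ct h = h" using h by (simp add: ct_const)
    ultimately show "h \<in> {0}" by simp
  qed
qed

end

context qtb begin

lemma congr_F: "congr_int n A lam i j \<in> F"
  unfolding congr_int_def using lamF by (auto intro!: Fsum Fmult)

lemma part_b: "C_set n br \<inter> {M. \<forall>i j. M i j \<in> F} = {congr_int n A lam | A. True}"
proof
  show "{congr_int n A lam | A. True} \<subseteq> C_set n br \<inter> {M. \<forall>i j. M i j \<in> F}"
  proof
    fix M assume "M \<in> {congr_int n A lam | A. True}"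
    then obtain A where MA: "M = congr_int n A lam" by blast
    define a where "a i = (\<lambda>p. if p < n then A i p else 0)" for i
    define y where "y i = X (a i)" for i
    have "C_mat n br y = M"
    proof (intro ext)
      fix i j
      show "C_mat n br y i j = M i j"
      proof (cases "i < n \<and> j < n")
        case True
        have "C_mat n br y i j = D (X (a i)) (X (a j))" unfolding C_mat_def D_def y_def using True by simp
        also have "\<dots> = B (a i) (a j)" by (rule D_X)
        also have "\<dots> = M i j" unfolding MA congr_int_def B_def a_def using True by simp
        finally show ?thesis .
      next
        case False then show ?thesis unfolding C_mat_def MA congr_int_def by auto
      qed
    qed
    moreover have "\<forall>i<n. y i \<noteq> 0" unfolding y_def by simp
    ultimately have "M \<in> C_set n br" unfolding C_set_def by blast
    moreover have "\<forall>i j. M i j \<in> F" unfolding MA by (simp add: congr_F)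
    ultimately show "M \<in> C_set n br \<inter> {M. \<forall>i j. M i j \<in> F}" by blast
  qed
next
  show "C_set n br \<inter> {M. \<forall>i j. M i j \<in> F} \<subseteq> {congr_int n A lam | A. True}"
  proof
    fix M assume M: "M \<in> C_set n br \<inter> {M. \<forall>i j. M i j \<in> F}"
    then obtain y where y: "M = C_mat n br y" "\<forall>i<n. y i \<noteq> 0" unfolding C_set_def by blast
    have MF: "\<forall>i j. M i j \<in> F" using M by blast
    have "\<forall>i. \<exists>c e u v. i < n \<longrightarrow> (c \<in> F \<and> c \<noteq> 0 \<and> e \<in> Zn \<and> u \<in> Pp \<and> v \<in> Pp \<and> y i = c * X e * ((1 + u) / (1 + v)))"
      using Dec y(2) by blast
    then obtain c e u v where cev: "\<And>i. i < n \<Longrightarrow> c i \<in> F \<and> c i \<noteq> 0 \<and> e i \<in> Zn \<and> u i \<in> Pp \<and> v i \<in> Pp \<and> y i = c i * X (e i) * ((1 + u i) / (1 + v i))"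
      by metis
    have "M = congr_int n e lam"
    proof (intro ext)
      fix i j
      show "M i j = congr_int n e lam i j"
      proof (cases "i < n \<and> j < n")
        case True
        then have ci: "c i \<in> F \<and> c i \<noteq> 0 \<and> e i \<in> Zn \<and> u i \<in> Pp \<and> v i \<in> Pp \<and> y i = c i * X (e i) * ((1 + u i) / (1 + v i))"
          and cj: "c j \<in> F \<and> c j \<noteq> 0 \<and> e j \<in> Zn \<and> u j \<in> Pp \<and> v j \<in> Pp \<and> y j = c j * X (e j) * ((1 + u j) / (1 + v j))"
          using cev by auto
        have Mij: "M i j = D (y i) (y j)" unfolding y(1) C_mat_def D_def using True by simp
        have "D (y i) (y j) - B (e i) (e j) \<in> Pos"
          using Dmain[of "c i" "c j" "e i" "e j" "u i" "v i" "u j" "v j"] ci cj by simp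
        moreover have "D (y i) (y j) - B (e i) (e j) \<in> F" using MF Mij by (metis B_F Fdiff)
        ultimately have "D (y i) (y j) = B (e i) (e j)" using Pos_F by fastforce
        then show ?thesis unfolding Mij congr_int_def B_def using True by simp
      next
        case False then show ?thesis unfolding y(1) C_mat_def congr_int_def by auto
      qed
    qed
    then show "M \<in> {congr_int n A lam | A. True}" by blast
  qed
qed

end

theorem proposition5p2:
  fixes F :: "'a::field_char_0 set" and n :: nat and lam :: "nat \<Rightarrow> nat \<Rightarrow> 'a"
    and x :: "nat \<Rightarrow> 'a" and br :: "'a \<Rightarrow> 'a \<Rightarrow> 'a"
  assumes lamF: "\<forall>i<n. \<forall>j<n. lam i j \<in> F"
    and antisym: "\<forall>i<n. \<forall>j<n. lam j i = - lam i j"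
    and K: "is_quantum_torus_bracket F n lam x br"
  shows "bracket_span F br \<inter> F = {0} \<and>
    C_set n br \<inter> {M. \<forall>i j. M i j \<in> F} = {congr_int n A lam | A. True}"
proof -
  interpret qtb F n lam x br using assms by unfold_locales
  show ?thesis using part_a part_b by simp
qed


end
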